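(* Let $d$ be a prime and $(p_{nm})_{n,m\in\mathbb{Z}_d}$ a probability distribution on $\mathbb{Z}_d\times\mathbb{Z}_d$. Consider the $d+1$ lines through the origin $\{(0,k):k\in\mathbb{Z}_d\}$ and $\{(k,ak):k\in\mathbb{Z}_d\}$ for $a\in\mathbb{Z}_d$, and let $L_1,\dots,L_{d+1}$ be the sums of $p_{nm}$ over these lines. If $p_{00}>1/d$, then $L_{\max}:=\max\{L_1,\dots,L_{d+1}\}>\frac{2}{d+1}$.
   Context: The $p_{nm}$ are Bell-diagonal probabilities of a two-qudit state; the $d+1$ lines correspond to the $d+1$ mutually unbiased bases, and $L_i$ is the weight associated with the $i$-th one. *)

theory Defs
  imports Complex_Main "HOL-Computational_Algebra.Primes"
begin

text \<open>Z_d is represented by {0..<d} with arithmetic mod d.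
  Lines through the origin in Z_d x Z_d: the vertical line {(0,k)} and,
  for each slope a, the line {(k, a k mod d)}.\<close>

definition vline :: "nat \<Rightarrow> (nat \<times> nat) set" where
  "vline d = {(0, k) | k. k < d}"

definition sline :: "nat \<Rightarrow> nat \<Rightarrow> (nat \<times> nat) set" where
  "sline d a = {(k, (a * k) mod d) | k. k < d}"

definition mub_line :: "nat \<Rightarrow> nat \<Rightarrow> (nat \<times> nat) set" where
  "mub_line d i = (if i < d then sline d i else vline d)"

definition line_weight :: "nat \<Rightarrow> (nat \<Rightarrow> nat \<Rightarrow> real) \<Rightarrow> nat \<Rightarrow> real" where
  "line_weight d p i = (\<Sum>(n, m)\<in>mub_line d i. p n m)"

definition L_max :: "nat \<Rightarrow> (nat \<Rightarrow> nat \<Rightarrow> real) \<Rightarrow> real" where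
  "L_max d p = Max (line_weight d p ` {0..d})"

end

theory Submission
  imports Defs "HOL-Number_Theory.Cong"
begin

lemma exists_line:
  fixes d n m :: nat
  assumes "prime d" "n < d" "m < d" "(n, m) \<noteq> (0, 0)"
  shows "\<exists>i\<in>{0..d}. (n, m) \<in> mub_line d i"
proof (cases "n = 0")
  case True
  then show ?thesis using assms by (intro bexI[of _ d]) (auto simp: mub_line_def vline_def)
next
  case False
  have "coprime n d"
    using assms False by (metis prime_imp_coprime_nat coprime_commute dvd_imp_le neq0_conv not_le)
  then have "gcd n d dvd m" by simp
  from cong_solve_dvd_nat[OF this] obtain x where x: "[n * x = m] (mod d)" by blast
  have d0: "d > 0" using assms by auto
  define a where "a = x mod d"
  have "(a * n) mod d = (x * n) mod d" unfolding a_def by (simp add: mod_mult_left_eq)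
  also have "\<dots> = (n * x) mod d" by (simp add: mult.commute)
  also have "\<dots> = m mod d" using x unfolding cong_def .
  also have "\<dots> = m" using assms(3) by simp
  finally have "(a * n) mod d = m" .
  then have "(n, m) \<in> sline d a" using assms(2) unfolding sline_def by auto
  moreover have "a < d" using d0 a_def by auto
  ultimately show ?thesis by (intro bexI[of _ a]) (auto simp: mub_line_def)
qed

lemma line_sub:
  assumes "d > 0" "i \<in> {0..d}"
  shows "mub_line d i \<subseteq> {..<d} \<times> {..<d}"
  using assms by (auto simp: mub_line_def sline_def vline_def)

lemma origin_in:
  assumes "d > 0"
  shows "(0, 0) \<in> mub_line d i"
  using assms by (auto simp: mub_line_def sline_def vline_def)

theorem lemma5:
  fixes d :: nat and p :: "nat \<Rightarrow> nat \<Rightarrow> real"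
  assumes "prime d"
    and "\<And>n m. n < d \<Longrightarrow> m < d \<Longrightarrow> p n m \<ge> 0"
    and "(\<Sum>n<d. \<Sum>m<d. p n m) = 1"
    and "p 0 0 > 1 / real d"
  shows "L_max d p > 2 / (real d + 1)"
proof -
  have d0: "d > 0" using assms(1) prime_gt_0_nat by blast
  define G where "G = {..<d} \<times> {..<d}"
  define q where "q = (\<lambda>(n, m). p n m)"
  have finG: "finite G" unfolding G_def by auto
  have qnn: "\<And>x. x \<in> G \<Longrightarrow> q x \<ge> 0" using assms(2) unfolding G_def q_def by auto
  have sumG: "(\<Sum>x\<in>G. q x) = 1"
    using assms(3) unfolding G_def q_def by (simp add: sum.cartesian_product)
  have orig: "(0, 0) \<in> G" using d0 unfolding G_def by auto
  have L: "line_weight d p i = (\<Sum>x\<in>G. if x \<in> mub_line d i then q x else 0)" if "i \<in> {0..d}" for i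
  proof -
    have "line_weight d p i = (\<Sum>x\<in>mub_line d i. q x)"
      unfolding line_weight_def q_def by simp
    also have "\<dots> = (\<Sum>x\<in>G. if x \<in> mub_line d i then q x else 0)"
      using line_sub[OF d0 that] finG unfolding G_def
      by (simp add: sum.If_cases Int_absorb1)
    finally show ?thesis .
  qed
  have "(\<Sum>i\<in>{0..d}. line_weight d p i) = (\<Sum>i\<in>{0..d}. \<Sum>x\<in>G. if x \<in> mub_line d i then q x else 0)"
    using L by (rule sum.cong[OF refl])
  also have "\<dots> = (\<Sum>x\<in>G. \<Sum>i\<in>{0..d}. if x \<in> mub_line d i then q x else 0)"
    by (rule sum.swap)
  also have "\<dots> \<ge> (\<Sum>x\<in>G. q x + (if x = (0,0) then real d * q x else 0))"
  proof (rule sum_mono)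
    fix x assume xG: "x \<in> G"
    show "q x + (if x = (0,0) then real d * q x else 0) \<le> (\<Sum>i\<in>{0..d}. if x \<in> mub_line d i then q x else 0)"
    proof (cases "x = (0,0)")
      case True
      then show ?thesis using origin_in[OF d0] by (simp add: algebra_simps)
    next
      case False
      obtain n m where nm: "x = (n, m)" by fastforce
      have "n < d" "m < d" "(n, m) \<noteq> (0, 0)" using nm xG False unfolding G_def by auto
      from exists_line[OF assms(1) this] obtain i where i: "i \<in> {0..d}" "x \<in> mub_line d i"
        using nm by blast
      have "q x = (if x \<in> mub_line d i then q x else 0)" using i by simp
      also have "\<dots> \<le> (\<Sum>i\<in>{0..d}. if x \<in> mub_line d i then q x else 0)"
        by (rule member_le_sum) (use i qnn[OF xG] in auto)
      finally show ?thesis using False by simp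
    qed
  qed
  finally have S: "(\<Sum>i\<in>{0..d}. line_weight d p i) \<ge> 1 + real d * p 0 0"
    using sumG orig finG by (simp add: sum.distrib sum.delta q_def)
  have "(\<Sum>i\<in>{0..d}. line_weight d p i) \<le> (\<Sum>i\<in>{0..d}. L_max d p)"
    by (rule sum_mono) (auto simp: L_max_def intro: Max_ge)
  also have "\<dots> = (real d + 1) * L_max d p" by simp
  finally have "1 + real d * p 0 0 \<le> (real d + 1) * L_max d p" using S by linarith
  moreover have "real d * p 0 0 > 1" using assms(4) d0 by (simp add: field_simps)
  ultimately have "2 < (real d + 1) * L_max d p" by linarith
  then show ?thesis by (simp add: field_simps add_pos_pos)
qed

end
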